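(* Let $Y$ be a fixed point combinator, $f$ a variable, and $B'_Y \equiv Y(\lambda x.\, f x (f x (Y(\lambda y.\, f x y))))$. Then for every $n\ge0$, if the subtree of $\mathrm{BT}^c(B'_Y)$ at position $(12)^n2$ carries an annotation, that annotation is $0$.
   Context: Untyped $\lambda$-calculus modulo $\alpha$. A fixed point combinator is a term $Y$ with $Yz=_\beta z(Yz)$ for a variable $z$ not free in $Y$. Head reduction step: $\lambda x_1\ldots x_n.(\lambda y.P)QQ_1\ldots Q_m \to \lambda x_1\ldots x_n.P[y:=Q]Q_1\ldots Q_m$; hnf: $\lambda x_1\ldots x_n.\,yQ_1\ldots Q_m$. The clocked Böhm tree $\mathrm{BT}^c(M)$ is defined coinductively: $\bot$ if $M$ has no hnf; otherwise, if $M\to_h^k \lambda x_1\ldots x_n.\,yM_1\ldots M_m$ is the head reduction to hnf ($k$ steps), $\mathrm{BT}^c(M)$ is the tree $\lambda x_1\ldots x_n.\,y\,\mathrm{BT}^c(M_1)\ldots\mathrm{BT}^c(M_m)$ whose root node is annotated with $k$. Positions are sequences over $\{0,1,2\}$ in applicative notation: $0$ enters an abstraction body, $1$ the function part and $2$ the argument of an application (so in a tree $f\,S\,T=(fS)T$, $S$ is at position $12$ and $T$ at position $2$); $(12)^n2$ denotes $n$ repetitions of $12$ followed by $2$. *)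

theory Defs
  imports Main
begin

datatype dB = Var nat | App dB dB | Abs dB

primrec lift :: "dB \<Rightarrow> nat \<Rightarrow> dB" where
  "lift (Var i) k = (if i < k then Var i else Var (Suc i))"
| "lift (App s t) k = App (lift s k) (lift t k)"
| "lift (Abs s) k = Abs (lift s (Suc k))"

text \<open>subst s t k  =  s[k := t] (capture avoiding, removing binder k)\<close>
primrec subst :: "dB \<Rightarrow> dB \<Rightarrow> nat \<Rightarrow> dB" where
  "subst (Var i) t k = (if k < i then Var (i - 1) else if i = k then t else Var i)"
| "subst (App s u) t k = App (subst s t k) (subst u t k)"
| "subst (Abs s) t k = Abs (subst s (lift t 0) (Suc k))"

primrec free :: "dB \<Rightarrow> nat \<Rightarrow> bool" where
  "free (Var j) i = (j = i)"
| "free (App s t) i = (free s i \<or> free t i)"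
| "free (Abs s) i = free s (Suc i)"

inductive beta :: "dB \<Rightarrow> dB \<Rightarrow> bool" where
  beta_redex: "beta (App (Abs s) t) (subst s t 0)"
| appL: "beta s t \<Longrightarrow> beta (App s u) (App t u)"
| appR: "beta s t \<Longrightarrow> beta (App u s) (App u t)"
| abs: "beta s t \<Longrightarrow> beta (Abs s) (Abs t)"

definition beta_eq :: "dB \<Rightarrow> dB \<Rightarrow> bool" where
  "beta_eq = equivclp beta"

definition fixed_point_combinator :: "dB \<Rightarrow> bool" where
  "fixed_point_combinator Y \<longleftrightarrow>
     (\<exists>z. \<not> free Y z \<and> beta_eq (App Y (Var z)) (App (Var z) (App Y (Var z))))"

fun hred :: "dB \<Rightarrow> dB option" where
  "hred (Var i) = None"
| "hred (Abs s) = map_option Abs (hred s)"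
| "hred (App (Abs s) t) = Some (subst s t 0)"
| "hred (App (Var i) t) = None"
| "hred (App (App s u) t) = map_option (\<lambda>s'. App s' t) (hred (App s u))"

definition hsteps :: "nat \<Rightarrow> dB \<Rightarrow> dB option" where
  "hsteps k M = ((\<lambda>m. Option.bind m hred) ^^ k) (Some M)"

primrec strip_abs :: "dB \<Rightarrow> nat \<times> dB" where
  "strip_abs (Var i) = (0, Var i)"
| "strip_abs (App s t) = (0, App s t)"
| "strip_abs (Abs s) = (let (n, b) = strip_abs s in (Suc n, b))"

primrec spine :: "dB \<Rightarrow> dB \<times> dB list" where
  "spine (Var i) = (Var i, [])"
| "spine (Abs s) = (Abs s, [])"
| "spine (App s t) = (let (h, as) = spine s in (h, as @ [t]))"

definition is_hnf :: "dB \<Rightarrow> bool" where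
  "is_hnf M \<longleftrightarrow> (\<exists>y. fst (spine (snd (strip_abs M))) = Var y)"

definition has_hnf :: "dB \<Rightarrow> bool" where
  "has_hnf M \<longleftrightarrow> (\<exists>k N. hsteps k M = Some N \<and> is_hnf N)"

definition hnf_k :: "dB \<Rightarrow> nat" where
  "hnf_k M = (LEAST k. \<exists>N. hsteps k M = Some N \<and> is_hnf N)"

definition hnf_of :: "dB \<Rightarrow> dB" where
  "hnf_of M = the (hsteps (hnf_k M) M)"

definition hnf_lams :: "dB \<Rightarrow> nat" where
  "hnf_lams N = fst (strip_abs N)"

definition hnf_var :: "dB \<Rightarrow> nat" where
  "hnf_var N = (case fst (spine (snd (strip_abs N))) of Var y \<Rightarrow> y | _ \<Rightarrow> 0)"

definition hnf_args :: "dB \<Rightarrow> dB list" where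
  "hnf_args N = snd (spine (snd (strip_abs N)))"

text \<open>CNode k n y ts : the tree  \<lambda>x1..xn. y t1 ... tm  with root annotation k
  (y a de Bruijn index relative to the n binders).\<close>
codatatype ctree = CBot | CNode nat nat nat "ctree list"

primcorec BTc :: "dB \<Rightarrow> ctree" where
  "BTc M = (if has_hnf M
            then CNode (hnf_k M) (hnf_lams (hnf_of M)) (hnf_var (hnf_of M))
                   (map BTc (hnf_args (hnf_of M)))
            else CBot)"

definition nargs :: "ctree \<Rightarrow> nat" where
  "nargs t = (case t of CBot \<Rightarrow> 0 | CNode k n y ts \<Rightarrow> length ts)"

text \<open>walk p t i j : follow position p starting from the piece
  \<lambda>x_(i+1)..x_n. y t_1 .. t_j  of the node t (i binders and all but j arguments removed).
  0 enters an abstraction body, 1 the function part, 2 the argument of an application.\<close>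
fun walk :: "nat list \<Rightarrow> ctree \<Rightarrow> nat \<Rightarrow> nat \<Rightarrow> (ctree \<times> nat \<times> nat) option" where
  "walk [] t i j = Some (t, i, j)"
| "walk (d # p) t i j =
     (case t of CBot \<Rightarrow> None
      | CNode k n y ts \<Rightarrow>
          (if d = 0 \<and> i < n then walk p t (Suc i) j
           else if d = 1 \<and> i = n \<and> 0 < j then walk p t i (j - 1)
           else if d = 2 \<and> i = n \<and> 0 < j then walk p (ts ! (j - 1)) 0 (nargs (ts ! (j - 1)))
           else None))"

text \<open>The annotation carried by the subtree at position p (None if there is no such
  subtree, or it is bot, or it is not a root node of some BT^c and so has no annotation).\<close>
definition annot_at :: "ctree \<Rightarrow> nat list \<Rightarrow> nat option" where
  "annot_at t p =
     (case walk p t 0 (nargs t) of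
        Some (CNode k n y ts, i, j) \<Rightarrow> (if i = 0 \<and> j = length ts then Some k else None)
      | _ \<Rightarrow> None)"

text \<open>B'_Y = Y (\<lambda>x. f x (f x (Y (\<lambda>y. f x y)))) with f the free variable (index) f.\<close>
definition Bprime :: "dB \<Rightarrow> nat \<Rightarrow> dB" where
  "Bprime Y f =
     App Y (Abs (App (App (Var (Suc f)) (Var 0))
                     (App (App (Var (Suc f)) (Var 0))
                          (App (lift Y 0)
                               (Abs (App (App (Var (Suc (Suc f))) (Var 1)) (Var 0)))))))"

end

theory Submission
  imports Defs
begin


declare subst.simps(1)[simp del] if_not_P [simp] not_less_eq [simp]

lemma subst_eq [simp]: "subst (Var k) u k = u"
  by (simp add: subst.simps)
lemma subst_gt [simp]: "i < j \<Longrightarrow> subst (Var j) u i = Var (j - 1)"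
  by (simp add: subst.simps)
lemma subst_lt [simp]: "j < i \<Longrightarrow> subst (Var j) u i = Var j"
  by (simp add: subst.simps)

lemma lift_lift:
    "i < k + 1 \<Longrightarrow> lift (lift t i) (Suc k) = lift (lift t k) i"
  by (induct t arbitrary: i k) auto

lemma lift_subst [simp]:
    "j < i + 1 \<Longrightarrow> lift (subst t s j) i = subst (lift t (i + 1)) (lift s i) j"
  by (induct t arbitrary: i j s)
    (simp_all add: diff_Suc subst.simps lift_lift split: nat.split)

lemma lift_subst_lt:
    "i < j + 1 \<Longrightarrow> lift (subst t s j) i = subst (lift t i) (lift s i) (j + 1)"
  by (induct t arbitrary: i j s) (simp_all add: subst.simps lift_lift)

lemma subst_lift [simp]:
    "subst (lift t k) s k = t"
  by (induct t arbitrary: k s) simp_all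

lemma subst_subst:
    "i < j + 1 \<Longrightarrow> subst (subst t (lift v i) (Suc j)) (subst u v j) i = subst (subst t u i) v j"
  by (induct t arbitrary: i j u v)
    (simp_all add: diff_Suc subst.simps lift_lift [symmetric] lift_subst_lt
      split: nat.split)

inductive par :: "dB \<Rightarrow> dB \<Rightarrow> bool" where
    pvar [simp, intro!]: "par (Var n) (Var n)"
  | pabs [simp, intro!]: "par s t \<Longrightarrow> par (Abs s) (Abs t)"
  | papp [simp, intro!]: "par s s' \<Longrightarrow> par t t' \<Longrightarrow> par (App s t) (App s' t')"
  | pbeta [simp, intro!]: "par s s' \<Longrightarrow> par t t' \<Longrightarrow> par (App (Abs s) t) (subst s' t' 0)"

inductive_cases par_cases [elim!]:
  "par (Var n) t"
  "par (Abs s) (Abs t)"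
  "par (App (Abs s) t) u"
  "par (App s t) u"
  "par (Abs s) t"

inductive_cases beta_cases [elim!]:
  "beta (Var i) t"
  "beta (Abs r) s"
  "beta (App s t) u"

declare beta.intros [simp, intro!]

lemma par_refl [simp]: "par t t"
  by (induct t) simp_all

lemma beta_par: "beta s t \<Longrightarrow> par s t"
  by (induct rule: beta.induct) auto

lemma rtr_Abs: "beta\<^sup>*\<^sup>* s s' \<Longrightarrow> beta\<^sup>*\<^sup>* (Abs s) (Abs s')"
  by (induct set: rtranclp) (blast intro: rtranclp.rtrancl_into_rtrancl)+
lemma rtr_AppL: "beta\<^sup>*\<^sup>* s s' \<Longrightarrow> beta\<^sup>*\<^sup>* (App s t) (App s' t)"
  by (induct set: rtranclp) (blast intro: rtranclp.rtrancl_into_rtrancl)+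
lemma rtr_AppR: "beta\<^sup>*\<^sup>* t t' \<Longrightarrow> beta\<^sup>*\<^sup>* (App s t) (App s t')"
  by (induct set: rtranclp) (blast intro: rtranclp.rtrancl_into_rtrancl)+
lemma rtr_App: "beta\<^sup>*\<^sup>* s s' \<Longrightarrow> beta\<^sup>*\<^sup>* t t' \<Longrightarrow> beta\<^sup>*\<^sup>* (App s t) (App s' t')"
  by (blast intro!: rtr_AppL rtr_AppR intro: rtranclp_trans)

lemma par_beta: "par s t \<Longrightarrow> beta\<^sup>*\<^sup>* s t"
proof (induct rule: par.induct)
  case (pbeta s s' t t')
  have "beta\<^sup>*\<^sup>* (App (Abs s) t) (App (Abs s') t')" using pbeta by (blast intro: rtr_App rtr_Abs)
  then show ?case by (blast intro: rtranclp.rtrancl_into_rtrancl)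
qed (auto intro: rtr_App rtr_Abs)

lemma par_lift [simp]: "par t t' \<Longrightarrow> par (lift t n) (lift t' n)"
  by (induct t arbitrary: t' n) fastforce+

lemma par_subst:
    "par t t' \<Longrightarrow> par s s' \<Longrightarrow> par (subst t s n) (subst t' s' n)"
proof (induct t t' arbitrary: s s' n rule: par.induct)
  case (pvar i) then show ?case by (simp add: subst.simps)
next
  case (pabs a b) then show ?case by simp
next
  case (papp a a' b b') then show ?case by simp
next
  case (pbeta u u' t t')
  have e: "subst (subst u' t' 0) s' n = subst (subst u' (lift s' 0) (Suc n)) (subst t' s' n) 0"
    using subst_subst[of 0 n u' s' t'] by simp
  have "par (subst u (lift s 0) (Suc n)) (subst u' (lift s' 0) (Suc n))"
    using pbeta by simp
  moreover have "par (subst t s n) (subst t' s' n)" using pbeta by simp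
  ultimately show ?case unfolding e by simp
qed

fun cd :: "dB \<Rightarrow> dB" where
  "cd (Var n) = Var n"
| "cd (App (Var n) t) = App (Var n) (cd t)"
| "cd (App (App s1 s2) t) = App (cd (App s1 s2)) (cd t)"
| "cd (App (Abs u) t) = subst (cd u) (cd t) 0"
| "cd (Abs s) = Abs (cd s)"

lemma par_cd: "par s t \<Longrightarrow> par t (cd s)"
  apply (induct s arbitrary: t rule: cd.induct)
      apply auto
  apply (fast intro!: par_subst)
  done

lemma strip: "par\<^sup>*\<^sup>* s u \<Longrightarrow> par s t \<Longrightarrow> \<exists>v. par\<^sup>*\<^sup>* t v \<and> par u v"
proof (induct arbitrary: t rule: rtranclp.induct)
  case (rtrancl_refl a) then show ?case by blast
next
  case (rtrancl_into_rtrancl a b c)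
  then obtain v where "par\<^sup>*\<^sup>* t v" "par b v" by blast
  moreover have "par v (cd b)" "par c (cd b)" using \<open>par b v\<close> rtrancl_into_rtrancl(3) par_cd by auto
  ultimately show ?case by (meson rtranclp.rtrancl_into_rtrancl)
qed

lemma par_conf: "par\<^sup>*\<^sup>* s t \<Longrightarrow> par\<^sup>*\<^sup>* s u \<Longrightarrow> \<exists>v. par\<^sup>*\<^sup>* t v \<and> par\<^sup>*\<^sup>* u v"
proof (induct arbitrary: u rule: rtranclp.induct)
  case (rtrancl_refl a) then show ?case by blast
next
  case (rtrancl_into_rtrancl a b c)
  then obtain v where v: "par\<^sup>*\<^sup>* b v" "par\<^sup>*\<^sup>* u v" by blast
  from strip[OF v(1) rtrancl_into_rtrancl(3)] obtain w where "par\<^sup>*\<^sup>* c w" "par v w" by blast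
  with v show ?case by (meson rtranclp.rtrancl_into_rtrancl)
qed

lemma beta_par_rtr: "beta\<^sup>*\<^sup>* s t \<Longrightarrow> par\<^sup>*\<^sup>* s t"
  by (induct rule: rtranclp.induct) (auto intro: rtranclp.rtrancl_into_rtrancl beta_par)

lemma par_rtr_beta: "par\<^sup>*\<^sup>* s t \<Longrightarrow> beta\<^sup>*\<^sup>* s t"
  by (induct rule: rtranclp.induct) (auto intro: rtranclp_trans par_beta)

lemma beta_conf: "beta\<^sup>*\<^sup>* s t \<Longrightarrow> beta\<^sup>*\<^sup>* s u \<Longrightarrow> \<exists>v. beta\<^sup>*\<^sup>* t v \<and> beta\<^sup>*\<^sup>* u v"
  using par_conf beta_par_rtr par_rtr_beta by meson

lemma beta_eq_CR: "beta_eq s t \<Longrightarrow> \<exists>v. beta\<^sup>*\<^sup>* s v \<and> beta\<^sup>*\<^sup>* t v"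
  unfolding beta_eq_def
proof (induct rule: equivclp_induct)
  case base then show ?case by blast
next
  case (step y z)
  then obtain v where v: "beta\<^sup>*\<^sup>* s v" "beta\<^sup>*\<^sup>* y v" by blast
  show ?case
  proof (cases "beta y z")
    case True
    from beta_conf[OF v(2) r_into_rtranclp[of beta, OF True]] obtain w where "beta\<^sup>*\<^sup>* v w" "beta\<^sup>*\<^sup>* z w" by blast
    with v show ?thesis by (blast intro: rtranclp_trans)
  next
    case False
    then have "beta z y" using step by auto
    then have "beta\<^sup>*\<^sup>* z v" using v(2) by (rule converse_rtranclp_into_rtranclp)
    with v(1) show ?thesis by blast
  qed
qed



inductive wh :: "dB \<Rightarrow> dB \<Rightarrow> bool" where
  wbeta: "wh (App (Abs s) t) (subst s t 0)"
| wapp: "wh s s' \<Longrightarrow> wh (App s t) (App s' t)"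

inductive_cases wh_cases: "wh (Abs s) t" "wh (Var i) t"

lemma wh_beta: "wh s t \<Longrightarrow> beta s t"
  by (induct rule: wh.induct) auto

lemma whs_betas: "wh\<^sup>*\<^sup>* s t \<Longrightarrow> beta\<^sup>*\<^sup>* s t"
  by (induct rule: rtranclp.induct) (auto intro: rtranclp.rtrancl_into_rtrancl wh_beta)

lemma wh_hred: "wh s t \<Longrightarrow> hred s = Some t"
proof (induct rule: wh.induct)
  case (wbeta s t) then show ?case by simp
next
  case (wapp s s' t)
  show ?case
  proof (cases s)
    case (Var i) then show ?thesis using wapp by (auto elim: wh_cases)
  next
    case (Abs a) then show ?thesis using wapp by (auto elim: wh_cases)
  next
    case (App a b) then show ?thesis using wapp by simp
  qed
qed

lemma wh_lift: "wh s t \<Longrightarrow> wh (lift s k) (lift t k)"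
proof (induct arbitrary: k rule: wh.induct)
  case (wbeta s t)
  have "lift (subst s t 0) k = subst (lift s (Suc k)) (lift t k) 0" by simp
  then show ?case by (simp add: wh.wbeta)
next
  case (wapp s s' t) then show ?case by (simp add: wh.wapp)
qed

lemma wh_subst: "wh s t \<Longrightarrow> wh (subst s u k) (subst t u k)"
proof (induct arbitrary: u k rule: wh.induct)
  case (wbeta s t)
  have "subst (subst s t 0) u k = subst (subst s (lift u 0) (Suc k)) (subst t u k) 0"
    using subst_subst[of 0 k s u t] by simp
  then show ?case by (simp add: wh.wbeta)
next
  case (wapp s s' t) then show ?case by (simp add: wh.wapp)
qed

lemma whs_lift: "wh\<^sup>*\<^sup>* s t \<Longrightarrow> wh\<^sup>*\<^sup>* (lift s k) (lift t k)"
  by (induct rule: rtranclp.induct) (auto intro: rtranclp.rtrancl_into_rtrancl wh_lift)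

lemma whs_subst: "wh\<^sup>*\<^sup>* s t \<Longrightarrow> wh\<^sup>*\<^sup>* (subst s u k) (subst t u k)"
  by (induct rule: rtranclp.induct) (auto intro: rtranclp.rtrancl_into_rtrancl wh_subst)

lemma whs_AppL: "wh\<^sup>*\<^sup>* s s' \<Longrightarrow> wh\<^sup>*\<^sup>* (App s t) (App s' t)"
  by (induct rule: rtranclp.induct) (auto intro: rtranclp.rtrancl_into_rtrancl wh.wapp)

inductive st :: "dB \<Rightarrow> dB \<Rightarrow> bool" where
  st_var: "wh\<^sup>*\<^sup>* M (Var n) \<Longrightarrow> st M (Var n)"
| st_app: "wh\<^sup>*\<^sup>* M (App M1 M2) \<Longrightarrow> st M1 N1 \<Longrightarrow> st M2 N2 \<Longrightarrow> st M (App N1 N2)"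
| st_abs: "wh\<^sup>*\<^sup>* M (Abs M1) \<Longrightarrow> st M1 N1 \<Longrightarrow> st M (Abs N1)"

inductive_cases st_cases: "st M (Var n)" "st M (App N1 N2)" "st M (Abs N1)"

lemma st_refl: "st M M"
  by (induct M) (auto intro: st.intros)

lemma st_pre: "wh\<^sup>*\<^sup>* M M' \<Longrightarrow> st M' N \<Longrightarrow> st M N"
  by (erule st.cases) (auto intro: st.intros rtranclp_trans)

lemma st_lift: "st M N \<Longrightarrow> st (lift M k) (lift N k)"
proof (induct arbitrary: k rule: st.induct)
  case (st_var M n)
  then have "wh\<^sup>*\<^sup>* (lift M k) (lift (Var n) k)" by (rule whs_lift)
  then show ?case by (auto intro: st.st_var)
next
  case (st_app M M1 M2 N1 N2)
  then have "wh\<^sup>*\<^sup>* (lift M k) (App (lift M1 k) (lift M2 k))" using whs_lift by fastforce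
  then show ?case using st_app by (auto intro: st.st_app)
next
  case (st_abs M M1 N1)
  then have "wh\<^sup>*\<^sup>* (lift M k) (Abs (lift M1 (Suc k)))" using whs_lift by fastforce
  then show ?case using st_abs by (auto intro: st.st_abs)
qed

lemma st_subst: "st M M' \<Longrightarrow> st N N' \<Longrightarrow> st (subst M N k) (subst M' N' k)"
proof (induct arbitrary: N N' k rule: st.induct)
  case (st_var M n)
  then have w: "wh\<^sup>*\<^sup>* (subst M N k) (subst (Var n) N k)" by (blast intro: whs_subst)
  show ?case
  proof (cases "n = k")
    case True
    then show ?thesis using w st_var st_pre by simp
  next
    case False
    show ?thesis
    proof (cases "k < n")
      case True then show ?thesis using w by (simp add: st.st_var)
    next
      case False then have "n < k" using \<open>n \<noteq> k\<close> by simp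
      then show ?thesis using w by (simp add: st.st_var)
    qed
  qed
next
  case (st_app M M1 M2 N1 N2)
  from whs_subst[OF st_app(1), of N k]
  have "wh\<^sup>*\<^sup>* (subst M N k) (App (subst M1 N k) (subst M2 N k))" by simp
  then show ?case using st_app by (auto intro: st.st_app)
next
  case (st_abs M M1 N1)
  from whs_subst[OF st_abs(1), of N k]
  have "wh\<^sup>*\<^sup>* (subst M N k) (Abs (subst M1 (lift N 0) (Suc k)))" by simp
  moreover have "st (lift N 0) (lift N' 0)" using st_abs st_lift by blast
  ultimately show ?case using st_abs by (auto intro: st.st_abs)
qed

lemma st_beta: "beta N N' \<Longrightarrow> st M N \<Longrightarrow> st M N'"
proof (induct arbitrary: M rule: beta.induct)
  case (beta_redex s t)
  from beta_redex obtain M1 M2 where a: "wh\<^sup>*\<^sup>* M (App M1 M2)" "st M1 (Abs s)" "st M2 t"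
    by (auto elim: st_cases)
  from a(2) obtain P where b: "wh\<^sup>*\<^sup>* M1 (Abs P)" "st P s" by (auto elim: st_cases)
  have "wh\<^sup>*\<^sup>* M (App (Abs P) M2)" using a(1) whs_AppL[OF b(1)] by (rule rtranclp_trans)
  then have "wh\<^sup>*\<^sup>* M (subst P M2 0)" by (rule rtranclp.rtrancl_into_rtrancl) (rule wbeta)
  moreover have "st (subst P M2 0) (subst s t 0)" using b(2) a(3) by (rule st_subst)
  ultimately show ?case by (rule st_pre)
next
  case (appL s t u)
  then show ?case by (auto elim!: st_cases intro: st.st_app)
next
  case (appR s t u)
  then show ?case by (auto elim!: st_cases intro: st.st_app)
next
  case (abs s t)
  then show ?case by (auto elim!: st_cases intro: st.st_abs)
qed

lemma betas_st: "beta\<^sup>*\<^sup>* M N \<Longrightarrow> st M N"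
  by (induct rule: rtranclp.induct) (auto intro: st_refl st_beta)

lemma st_betas: "st M N \<Longrightarrow> beta\<^sup>*\<^sup>* M N"
proof (induct rule: st.induct)
  case (st_var M n) then show ?case by (rule whs_betas)
next
  case (st_app M M1 M2 N1 N2)
  then show ?case by (meson whs_betas rtr_App rtranclp_trans)
next
  case (st_abs M M1 N1)
  then show ?case by (meson whs_betas rtr_Abs rtranclp_trans)
qed

lemma head_lemma: "beta\<^sup>*\<^sup>* M (App (Var z) P) \<Longrightarrow> \<exists>Q. wh\<^sup>*\<^sup>* M (App (Var z) Q) \<and> beta\<^sup>*\<^sup>* Q P"
proof -
  assume "beta\<^sup>*\<^sup>* M (App (Var z) P)"
  then have "st M (App (Var z) P)" by (rule betas_st)
  then obtain M1 M2 where a: "wh\<^sup>*\<^sup>* M (App M1 M2)" "st M1 (Var z)" "st M2 P" by (auto elim: st_cases)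
  from a(2) have "wh\<^sup>*\<^sup>* M1 (Var z)" by (auto elim: st_cases)
  then have "wh\<^sup>*\<^sup>* M (App (Var z) M2)" using a(1) whs_AppL rtranclp_trans by metis
  then show ?thesis using a(3) st_betas by blast
qed



lemma betas_VarApp: "beta\<^sup>*\<^sup>* (App (Var z) E) R \<Longrightarrow> \<exists>R'. R = App (Var z) R' \<and> beta\<^sup>*\<^sup>* E R'"
proof (induct R rule: rtranclp_induct)
  case base then show ?case by blast
next
  case (step b c)
  then obtain R' where "b = App (Var z) R'" "beta\<^sup>*\<^sup>* E R'" by blast
  with step(2) show ?case by (auto intro: rtranclp.rtrancl_into_rtrancl)
qed

lemma HL:
  assumes beq: "beta_eq E (App (Var z) E)" and m: "beta_eq M E"
  shows "\<exists>Q. wh\<^sup>*\<^sup>* M (App (Var z) Q) \<and> beta_eq Q E"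
proof -
  have "beta_eq M (App (Var z) E)" using m beq unfolding beta_eq_def by (rule equivclp_trans)
  then obtain v where v: "beta\<^sup>*\<^sup>* M v" "beta\<^sup>*\<^sup>* (App (Var z) E) v" using beta_eq_CR by blast
  from betas_VarApp[OF v(2)] obtain R' where r: "v = App (Var z) R'" "beta\<^sup>*\<^sup>* E R'" by blast
  from head_lemma v(1) r(1) obtain Q where q: "wh\<^sup>*\<^sup>* M (App (Var z) Q)" "beta\<^sup>*\<^sup>* Q R'" by blast
  have "beta_eq Q E" unfolding beta_eq_def
    using equivclp_trans[OF rtranclp_into_equivclp[OF q(2)] converse_rtranclp_into_equivclp[OF r(2)]] .
  with q show ?thesis by blast
qed

lemma subst_lift_free: "\<not> free t k \<Longrightarrow> subst (lift t (Suc k)) u k = t"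
  by (induct t arbitrary: k u) (auto simp: subst.simps)

lemma hsteps_Suc: "hsteps (Suc k) M = Option.bind (hsteps k M) hred"
  by (simp add: hsteps_def)

lemma hsteps_0: "hsteps 0 M = Some M"
  by (simp add: hsteps_def)

lemma whs_hsteps: "wh\<^sup>*\<^sup>* M N \<Longrightarrow> \<exists>k. hsteps k M = Some N"
proof (induct rule: rtranclp.induct)
  case (rtrancl_refl a) then show ?case using hsteps_0 by blast
next
  case (rtrancl_into_rtrancl a b c)
  then obtain k where "hsteps k a = Some b" by blast
  then have "hsteps (Suc k) a = Some c" using wh_hred[OF rtrancl_into_rtrancl(3)] by (simp add: hsteps_Suc)
  then show ?case by blast
qed

lemma spine_hred: "fst (spine N) = Var y \<Longrightarrow> hred N = None"
proof (induct N)
  case (Var x) then show ?case by simp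
next
  case (App s t)
  then show ?case by (cases s) (auto split: prod.splits)
next
  case (Abs s) then show ?case by simp
qed

lemma hnf_hred: "fst (spine (snd (strip_abs N))) = Var y \<Longrightarrow> hred N = None"
proof (induct N)
  case (Var x) then show ?case by simp
next
  case (App s t) then show ?case using spine_hred by simp
next
  case (Abs s) then show ?case by (auto split: prod.splits)
qed

lemma is_hnf_hred: "is_hnf N \<Longrightarrow> hred N = None"
  unfolding is_hnf_def using hnf_hred by blast

lemma hsteps_after: "hsteps k M = Some N \<Longrightarrow> hred N = None \<Longrightarrow> hsteps (k + Suc j) M = None"
  by (induct j) (simp_all add: hsteps_Suc)

lemma hnf_determined:
  assumes "hsteps k M = Some N" "is_hnf N"
  shows "has_hnf M \<and> hnf_k M = k \<and> hnf_of M = N"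
proof -
  have uniq: "k' = k" if "hsteps k' M = Some N'" "is_hnf N'" for k' N'
  proof (rule ccontr)
    assume "k' \<noteq> k"
    then consider "k' < k" | "k < k'" by linarith
    then show False
    proof cases
      case 1
      then obtain j where "k = Suc (k' + j)" using less_imp_Suc_add by blast
      then have "k = k' + Suc j" by simp
      then show False using hsteps_after[OF that(1) is_hnf_hred[OF that(2)]] assms(1) by simp
    next
      case 2
      then obtain j where "k' = Suc (k + j)" using less_imp_Suc_add by blast
      then have "k' = k + Suc j" by simp
      then show False using hsteps_after[OF assms(1) is_hnf_hred[OF assms(2)]] that(1) by simp
    qed
  qed
  have hk: "hnf_k M = k" unfolding hnf_k_def
  proof (rule Least_equality)
    show "\<exists>N'. hsteps k M = Some N' \<and> is_hnf N'" using assms by blast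
  next
    fix y assume "\<exists>N'. hsteps y M = Some N' \<and> is_hnf N'"
    then obtain N' where "hsteps y M = Some N'" "is_hnf N'" by blast
    then show "k \<le> y" using uniq by simp
  qed
  have "has_hnf M" unfolding has_hnf_def using assms by blast
  moreover have "hnf_of M = N" unfolding hnf_of_def hk using assms(1) by simp
  ultimately show ?thesis using hk by blast
qed

lemma hnf_form: "is_hnf (App (App (Var f) X) A)"
  by (simp add: is_hnf_def)

lemma BTc_form:
  assumes "hsteps k M = Some (App (App (Var f) X) A)"
  shows "BTc M = CNode k 0 f [BTc X, BTc A]"
proof -
  from hnf_determined[OF assms hnf_form] have d: "has_hnf M" "hnf_k M = k" "hnf_of M = App (App (Var f) X) A" by auto
  show ?thesis
    by (subst BTc.code) (simp add: d hnf_lams_def hnf_var_def hnf_args_def)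
qed

lemma BTc_hnf0: "BTc (App (App (Var f) X) A) = CNode 0 0 f [BTc X, BTc A]"
  using BTc_form[of 0] hsteps_0 by simp

definition path :: "nat \<Rightarrow> nat list" where
  "path n = concat (replicate n [1, 2]) @ [2]"

lemma annot_0: "annot_at (CNode k 0 f [T1, CNode k' a b ts]) (path 0) = Some k'"
  by (simp add: annot_at_def path_def nargs_def)

lemma annot_Suc: "annot_at (CNode k 0 f [T1, T2]) (path (Suc n)) = annot_at T1 (path n)"
  by (simp add: annot_at_def path_def nargs_def)



theorem lemma5p2:
  fixes Y :: dB and f :: nat
  assumes "fixed_point_combinator Y"
  shows "\<forall>n k. annot_at (BTc (Bprime Y f)) (concat (replicate n [1, 2]) @ [2]) = Some k
           \<longrightarrow> k = 0"
proof -
  from assms obtain z where nf: "\<not> free Y z"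
    and beq0: "beta_eq (App Y (Var z)) (App (Var z) (App Y (Var z)))"
    unfolding fixed_point_combinator_def by blast
  define E where "E = App Y (Var z)"
  define body where "body = App (App (Var (Suc f)) (Var 0)) (App (App (Var (Suc f)) (Var 0))
       (App (lift Y 0) (Abs (App (App (Var (Suc (Suc f))) (Var 1)) (Var 0)))))"
  define F where "F = Abs body"
  define \<sigma> where "\<sigma> M = subst (lift M (Suc z)) F z" for M
  have beq: "beta_eq E (App (Var z) E)" using beq0 by (simp add: E_def)
  have sE: "\<sigma> E = Bprime Y f"
    by (simp add: \<sigma>_def E_def Bprime_def F_def body_def subst_lift_free[OF nf])
  have sApp: "\<sigma> (App (Var z) Q) = App F (\<sigma> Q)" for Q
    by (simp add: \<sigma>_def)
  have sw: "wh\<^sup>*\<^sup>* (\<sigma> M) (\<sigma> N)" if "wh\<^sup>*\<^sup>* M N" for M N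
    unfolding \<sigma>_def by (rule whs_subst, rule whs_lift, rule that)
  have key: "\<exists>k Q1 W. hsteps k (\<sigma> Q) = Some (App (App (Var f) (\<sigma> Q1)) (App (App (Var f) (\<sigma> Q1)) W))
              \<and> beta_eq Q1 E" if "beta_eq Q E" for Q
  proof -
    from HL[OF beq that] obtain Q1 where q: "wh\<^sup>*\<^sup>* Q (App (Var z) Q1)" "beta_eq Q1 E" by blast
    define X where "X = \<sigma> Q1"
    have "wh\<^sup>*\<^sup>* (\<sigma> Q) (App F X)" using sw[OF q(1)] sApp X_def by simp
    moreover have "wh (App F X) (subst body X 0)" unfolding F_def by (rule wbeta)
    ultimately have w: "wh\<^sup>*\<^sup>* (\<sigma> Q) (subst body X 0)" by (rule rtranclp.rtrancl_into_rtrancl)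
    obtain W where "subst body X 0 = App (App (Var f) X) (App (App (Var f) X) W)"
      by (simp add: body_def)
    with w whs_hsteps obtain k where "hsteps k (\<sigma> Q) = Some (App (App (Var f) X) (App (App (Var f) X) W))"
      by metis
    then show ?thesis using q(2) X_def by blast
  qed
  have main: "\<forall>Q k. beta_eq Q E \<longrightarrow> annot_at (BTc (\<sigma> Q)) (path n) = Some k \<longrightarrow> k = 0" for n
  proof (induct n)
    case 0
    show ?case
    proof (intro allI impI)
      fix Q k assume a: "beta_eq Q E" "annot_at (BTc (\<sigma> Q)) (path 0) = Some k"
      from key[OF a(1)] obtain k' Q1 W where
        h: "hsteps k' (\<sigma> Q) = Some (App (App (Var f) (\<sigma> Q1)) (App (App (Var f) (\<sigma> Q1)) W))" by blast
      have "BTc (\<sigma> Q) = CNode k' 0 f [BTc (\<sigma> Q1), CNode 0 0 f [BTc (\<sigma> Q1), BTc W]]"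
        using BTc_form[OF h] BTc_hnf0 by simp
      then show "k = 0" using a(2) annot_0 by simp
    qed
  next
    case (Suc n)
    show ?case
    proof (intro allI impI)
      fix Q k assume a: "beta_eq Q E" "annot_at (BTc (\<sigma> Q)) (path (Suc n)) = Some k"
      from key[OF a(1)] obtain k' Q1 W where
        h: "hsteps k' (\<sigma> Q) = Some (App (App (Var f) (\<sigma> Q1)) (App (App (Var f) (\<sigma> Q1)) W))"
        and q1: "beta_eq Q1 E" by blast
      have "annot_at (BTc (\<sigma> Q)) (path (Suc n)) = annot_at (BTc (\<sigma> Q1)) (path n)"
        using BTc_form[OF h] annot_Suc by simp
      then show "k = 0" using a(2) Suc q1 by metis
    qed
  qed
  have "beta_eq E E" by (simp add: beta_eq_def)
  then show ?thesis using main sE unfolding path_def by metis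
qed


end
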